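(* Let $\sigma>0$, $K(x,t)=e^{-\sigma^2(x-t)^2}$ on $[-1,1]^2$, and $T:L_2([-1,1])\to L_2([-1,1])$, $T[\phi](x)=\int_{-1}^1K(x,t)\phi(t)\,dt$, with eigenvalues $\lambda_1\ge\lambda_2\ge\dots$ counted with multiplicity. Then for every $k\in\mathbb{N}$, $$\lambda_k<8\Big(\frac{2}{e}(k-1)\Big)^{-\frac{k-1}{2}}\sigma^{k-1},$$ with the convention $0^0=1$. *)

theory Defs
  imports "HOL-Analysis.Analysis" "HOL-Library.Extended_Nat"
begin

definition gauss_kernel :: "real \<Rightarrow> real \<Rightarrow> real \<Rightarrow> real" where
  "gauss_kernel \<sigma> x t = exp (- (\<sigma>\<^sup>2) * (x - t)\<^sup>2)"

definition L2_11 :: "(real \<Rightarrow> real) \<Rightarrow> bool" where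
  "L2_11 \<phi> \<longleftrightarrow> \<phi> measurable_on {-1..1} \<and> (\<lambda>x. (\<phi> x)\<^sup>2) integrable_on {-1..1}"

definition gauss_op :: "real \<Rightarrow> (real \<Rightarrow> real) \<Rightarrow> real \<Rightarrow> real" where
  "gauss_op \<sigma> \<phi> x = integral {-1..1} (\<lambda>t. gauss_kernel \<sigma> x t * \<phi> t)"

definition in_eigenspace :: "real \<Rightarrow> real \<Rightarrow> (real \<Rightarrow> real) \<Rightarrow> bool" where
  "in_eigenspace \<sigma> \<mu> \<phi> \<longleftrightarrow> L2_11 \<phi> \<and>
     negligible {x \<in> {-1..1}. gauss_op \<sigma> \<phi> x \<noteq> \<mu> * \<phi> x}"

text \<open>Multiplicity of \<mu> = Hilbert dimension of the eigenspace: supremum of the sizes of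
  L2-orthonormal families in it.\<close>
definition eig_mult :: "real \<Rightarrow> real \<Rightarrow> enat" where
  "eig_mult \<sigma> \<mu> = Sup {enat n | n. \<exists>\<phi> :: nat \<Rightarrow> real \<Rightarrow> real.
      (\<forall>i<n. in_eigenspace \<sigma> \<mu> (\<phi> i)) \<and>
      (\<forall>i<n. \<forall>j<n. integral {-1..1} (\<lambda>x. \<phi> i x * \<phi> j x) = (if i = j then 1 else 0))}"

definition is_eigenvalue_seq :: "real \<Rightarrow> (nat \<Rightarrow> real) \<Rightarrow> bool" where
  "is_eigenvalue_seq \<sigma> lam \<longleftrightarrow>
     (\<forall>k\<ge>1. lam (Suc k) \<le> lam k) \<and>
     (\<forall>\<mu>. \<mu> \<noteq> 0 \<longrightarrow>
        eig_mult \<sigma> \<mu> = (if finite {k. k \<ge> 1 \<and> lam k = \<mu>}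
                           then enat (card {k. k \<ge> 1 \<and> lam k = \<mu>}) else \<infinity>))"

end

theory Submission
  imports Defs "HOL-Complex_Analysis.Complex_Analysis" "HOL-Computational_Algebra.Polynomial"
begin


fun cheb :: "nat \<Rightarrow> real poly" where
  "cheb 0 = 1"
| "cheb (Suc 0) = [:0,1:]"
| "cheb (Suc (Suc n)) = [:0,2:] * cheb (Suc n) - cheb n"

lemma cheb_cos: "poly (cheb n) (cos \<theta>) = cos (real n * \<theta>)"
proof (induction n rule: cheb.induct)
  case (3 n)
  have e: "cos (real (Suc (Suc n)) * \<theta>) = 2 * cos \<theta> * cos (real (Suc n) * \<theta>) - cos (real n * \<theta>)"
  proof -
    have "cos (real (Suc (Suc n)) * \<theta>) = cos (real (Suc n) * \<theta> + \<theta>)" by (simp add: algebra_simps)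
    moreover have "cos (real n * \<theta>) = cos (real (Suc n) * \<theta> - \<theta>)" by (simp add: algebra_simps)
    ultimately show ?thesis by (simp add: cos_add cos_diff)
  qed
  show ?case using 3 by (simp add: e del: of_nat_Suc)
qed auto

lemma cheb_coeffs: "coeff (cheb n) n = (if n = 0 then 1 else 2^(n-1)) \<and> (\<forall>j>n. coeff (cheb n) j = 0)"
proof (induction n rule: cheb.induct)
  case 1 then show ?case by (auto simp: coeff_1 )
next
  case 2 then show ?case by (auto simp: coeff_pCons split: nat.splits)
next
  case (3 n)
  have m: "[:0,2:] * p = pCons 0 (smult 2 p)" for p :: "real poly"
    by (simp add: mult_poly_0_left)
  show ?case
  proof (intro conjI allI impI)
    show "coeff (cheb (Suc (Suc n))) (Suc (Suc n)) = (if Suc (Suc n) = 0 then 1 else 2 ^ (Suc (Suc n) - 1))"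
      using 3 by (simp add: m coeff_diff)
    fix j assume j: "j > Suc (Suc n)"
    then obtain j' where "j = Suc j'" "j' > Suc n" by (cases j) auto
    then show "coeff (cheb (Suc (Suc n))) j = 0" using 3 by (simp add: m coeff_diff)
  qed
qed

lemma degree_cheb: "degree (cheb n) = n"
proof -
  have "coeff (cheb n) n \<noteq> 0" using cheb_coeffs[of n] by auto
  moreover have "degree (cheb n) \<le> n" using cheb_coeffs[of n] by (intro degree_le) auto
  ultimately show ?thesis using le_degree[of "cheb n" n] by linarith
qed

lemma lead_cheb: "n \<ge> 1 \<Longrightarrow> lead_coeff (cheb n) = 2^(n-1)"
  using cheb_coeffs[of n] by (simp add: degree_cheb)

lemma cheb_bound: "t \<in> {-1..1} \<Longrightarrow> \<bar>poly (cheb n) t\<bar> \<le> 1"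
  using cheb_cos[of n "arccos t"] by (simp add: cos_arccos)


lemma coeff_pderiv_iter:
  "coeff ((pderiv ^^ j) (p :: real poly)) n = fact (n + j) / fact n * coeff p (n + j)"
proof (induction j arbitrary: n)
  case 0 then show ?case by (simp add: fact_nonzero)
next
  case (Suc j)
  have "coeff ((pderiv ^^ Suc j) p) n = real (Suc n) * coeff ((pderiv ^^ j) p) (Suc n)"
    by (simp add: coeff_pderiv)
  also have "\<dots> = real (Suc n) * (fact (Suc n + j) / fact (Suc n) * coeff p (Suc n + j))"
    using Suc by simp
  also have "\<dots> = fact (n + Suc j) / fact n * coeff p (n + Suc j)"
  proof -
    have "Suc n + j = n + Suc j" by simp
    moreover have "(fact (Suc n) :: real) = real (Suc n) * fact n" by simp
    ultimately show ?thesis by (simp del: fact_Suc of_nat_Suc)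
  qed
  finally show ?case .
qed

lemma pderiv_iter_small: "degree p < m \<Longrightarrow> (pderiv ^^ m) (p :: real poly) = 0"
  by (rule poly_eqI) (simp add: coeff_pderiv_iter coeff_eq_0)

lemma pderiv_iter_top: "degree p \<le> m \<Longrightarrow> (pderiv ^^ m) (p :: real poly) = [:fact m * coeff p m:]"
proof (rule poly_eqI)
  fix n assume d: "degree p \<le> m"
  show "coeff ((pderiv ^^ m) p) n = coeff [:fact m * coeff p m:] n"
  proof (cases n)
    case 0 then show ?thesis by (simp add: coeff_pderiv_iter)
  next
    case (Suc n') then show ?thesis using d by (simp add: coeff_pderiv_iter coeff_eq_0)
  qed
qed

lemma gen_rolle:
  fixes h :: "nat \<Rightarrow> real \<Rightarrow> real"
  assumes "\<forall>j<n. \<forall>x\<in>{a..b}. (h j has_real_derivative h (Suc j) x) (at x)"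
    and "finite Z" "card Z = Suc n" "Z \<subseteq> {a..b}" "\<forall>z\<in>Z. h 0 z = 0"
  shows "\<exists>\<xi>\<in>{a..b}. h n \<xi> = 0"
  using assms
proof (induction n arbitrary: h Z)
  case 0
  obtain z where "Z = {z}" using 0(3) by (metis One_nat_def card_1_singletonE)
  then show ?case using 0 by auto
next
  case (Suc n)
  define zs where "zs = sorted_list_of_set Z"
  have len: "length zs = Suc (Suc n)" using Suc.prems by (simp add: zs_def)
  have srt: "sorted_wrt (<) zs" by (simp add: zs_def)
  have setzs: "set zs = Z" using Suc.prems by (simp add: zs_def)
  have lt: "zs ! i < zs ! j" if "i < j" "j < length zs" for i j
    using srt that by (simp add: sorted_wrt_iff_nth_less)
  have inZ: "zs ! i \<in> Z" if "i < length zs" for i using setzs that nth_mem by blast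
  have "\<exists>\<xi>. zs ! i < \<xi> \<and> \<xi> < zs ! Suc i \<and> h 1 \<xi> = 0" if i: "i \<le> n" for i
  proof -
    have ab: "zs ! i < zs ! Suc i" using lt[of i "Suc i"] len i by simp
    have "zs ! i \<in> Z" "zs ! Suc i \<in> Z" using inZ len i by auto
    then have ia: "zs ! i \<in> {a..b}" "zs ! Suc i \<in> {a..b}" using Suc.prems(4) by auto
    have der: "(h 0 has_real_derivative h 1 x) (at x)" if "zs ! i \<le> x" "x \<le> zs ! Suc i" for x
      using Suc.prems(1) ia that by auto
    have "h 0 (zs ! i) = h 0 (zs ! Suc i)" using Suc.prems(5) inZ len i by (simp)
    moreover have "continuous_on {zs!i..zs!Suc i} (h 0)"
      using der by (intro continuous_at_imp_continuous_on ballI) (auto intro: DERIV_isCont)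
    moreover have "\<And>x. zs!i<x \<Longrightarrow> x<zs!Suc i \<Longrightarrow> h 0 differentiable at x"
      using der real_differentiable_def less_imp_le by blast
    ultimately obtain z where z: "zs ! i < z" "z < zs ! Suc i" "DERIV (h 0) z :> 0"
      using Rolle[OF ab] by blast
    have "DERIV (h 0) z :> h 1 z" using der z by auto
    then have "h 1 z = 0" using z DERIV_unique by blast
    then show ?thesis using z by blast
  qed
  then obtain \<xi> where xi: "\<And>i. i \<le> n \<Longrightarrow> zs ! i < \<xi> i \<and> \<xi> i < zs ! Suc i \<and> h 1 (\<xi> i) = 0"
    by metis
  have mono: "\<xi> i < \<xi> j" if "i < j" "j \<le> n" for i j
  proof -
    have "\<xi> i < zs ! Suc i" using xi that by auto
    also have "zs ! Suc i \<le> zs ! j" using lt[of "Suc i" j] that len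
      by (cases "Suc i = j") auto
    also have "\<dots> < \<xi> j" using xi that by auto
    finally show ?thesis .
  qed
  have inj: "inj_on \<xi> {..n}"
    by (rule inj_onI) (metis atMost_iff linorder_neqE_nat mono order_less_irrefl)
  define Z' where "Z' = \<xi> ` {..n}"
  have "\<exists>\<xi>'\<in>{a..b}. (\<lambda>j. h (Suc j)) n \<xi>' = 0"
  proof (rule Suc.IH)
    show "\<forall>j<n. \<forall>x\<in>{a..b}. (h (Suc j) has_real_derivative h (Suc (Suc j)) x) (at x)"
      using Suc.prems(1) by auto
    show "finite Z'" by (simp add: Z'_def)
    show "card Z' = Suc n" using inj by (simp add: Z'_def card_image)
    show "Z' \<subseteq> {a..b}"
    proof
      fix y assume "y \<in> Z'"
      then obtain i where i: "i \<le> n" "y = \<xi> i" by (auto simp: Z'_def)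
      have "zs ! i \<in> Z" "zs ! Suc i \<in> Z" using inZ len i by auto
      then have "zs ! i \<in> {a..b}" "zs ! Suc i \<in> {a..b}" using Suc.prems(4) by auto
      then show "y \<in> {a..b}" using xi[OF i(1)] i by auto
    qed
    show "\<forall>z\<in>Z'. h (Suc 0) z = 0" using xi by (auto simp: Z'_def)
  qed
  then show ?case by simp
qed


definition cnode :: "nat \<Rightarrow> nat \<Rightarrow> real" where
  "cnode m i = cos ((2 * real i + 1) * pi / (2 * real m))"

lemma cnode_range: "cnode m i \<in> {-1..1}"
  by (simp add: cnode_def)

lemma cnode_root: "m \<ge> 1 \<Longrightarrow> poly (cheb m) (cnode m i) = 0"
proof -
  assume m: "m \<ge> 1"
  have "real m * ((2 * real i + 1) * pi / (2 * real m)) = real i * pi + pi / 2"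
    using m by (simp add: field_simps)
  then have "poly (cheb m) (cnode m i) = cos (real i * pi + pi / 2)"
    unfolding cnode_def cheb_cos by metis
  also have "\<dots> = 0" by (simp add: cos_add)
  finally show ?thesis .
qed

lemma cnode_inj: "inj_on (cnode m) {..<m}"
proof (rule inj_onI)
  fix i j assume i: "i \<in> {..<m}" and j: "j \<in> {..<m}" and e: "cnode m i = cnode m j"
  have mpos: "real m > 0" using i by auto
  have r: "0 \<le> (2 * real k + 1) * pi / (2 * real m) \<and> (2 * real k + 1) * pi / (2 * real m) \<le> pi"
    if "k < m" for k
  proof -
    have "2 * real k + 1 \<le> 2 * real m" using that by linarith
    then have "(2 * real k + 1) * pi \<le> (2 * real m) * pi" by (intro mult_right_mono) auto
    then show ?thesis using mpos by (auto simp: field_simps)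
  qed
  have "(2 * real i + 1) * pi / (2 * real m) = (2 * real j + 1) * pi / (2 * real m)"
    by (rule cos_inj_pi) (use r[of i] r[of j] i j e in \<open>auto simp: cnode_def\<close>)
  then show "i = j" using mpos by (simp add: field_simps)
qed

lemma cheb_nonzero: "cheb m \<noteq> 0"
proof
  assume "cheb m = 0"
  then have "coeff (cheb m) m = 0" by simp
  with cheb_coeffs[of m] show False by (simp split: if_splits)
qed

lemma cheb_roots: 
  assumes m: "m \<ge> 1" and t: "poly (cheb m) t = 0"
  shows "t \<in> cnode m ` {..<m}"
proof (rule ccontr)
  assume nt: "t \<notin> cnode m ` {..<m}"
  have "insert t (cnode m ` {..<m}) \<subseteq> {x. poly (cheb m) x = 0}"
    using t cnode_root[OF m] by auto
  then have "card (insert t (cnode m ` {..<m})) \<le> card {x. poly (cheb m) x = 0}"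
    by (intro card_mono poly_roots_finite cheb_nonzero)
  also have "\<dots> \<le> m" using card_poly_roots_bound[OF cheb_nonzero, of m] by (simp add: degree_cheb)
  finally show False using nt cnode_inj[of m] by (simp add: card_image)
qed

definition lagr :: "nat \<Rightarrow> (real \<Rightarrow> real) \<Rightarrow> real poly" where
  "lagr m f = (\<Sum>i<m. smult (f (cnode m i) / (\<Prod>j\<in>{..<m}-{i}. (cnode m i - cnode m j)))
       (\<Prod>j\<in>{..<m}-{i}. [:- cnode m j, 1:]))"

lemma degree_lagr: "m \<ge> 1 \<Longrightarrow> degree (lagr m f) < m"
proof -
  assume m: "m \<ge> 1"
  have "degree (lagr m f) \<le> m - 1"
    unfolding lagr_def
  proof (intro degree_sum_le)
    fix i assume i: "i \<in> {..<m}"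
    have "degree (\<Prod>j\<in>{..<m}-{i}. [:- cnode m j, 1:]) \<le> (\<Sum>j\<in>{..<m}-{i}. degree [:- cnode m j, 1:])"
      using degree_prod_sum_le[of "{..<m}-{i}" "\<lambda>j. [:- cnode m j, 1:]"] by (simp add: o_def)
    also have "\<dots> = m - 1" using i by simp
    finally show "degree (smult (f (cnode m i) / (\<Prod>j\<in>{..<m}-{i}. (cnode m i - cnode m j)))
       (\<Prod>j\<in>{..<m}-{i}. [:- cnode m j, 1:])) \<le> m - 1"
      using degree_smult_le order_trans by blast
  qed simp
  then show ?thesis using m by linarith
qed

lemma poly_lagr: assumes l: "l < m" shows "poly (lagr m f) (cnode m l) = f (cnode m l)"
proof -
  have "poly (lagr m f) (cnode m l) = (\<Sum>i<m. f (cnode m i) / (\<Prod>j\<in>{..<m}-{i}. (cnode m i - cnode m j))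
       * (\<Prod>j\<in>{..<m}-{i}. (cnode m l - cnode m j)))"
    by (simp add: lagr_def poly_sum poly_prod)
  also have "\<dots> = (\<Sum>i\<in>{l}. f (cnode m i) / (\<Prod>j\<in>{..<m}-{i}. (cnode m i - cnode m j))
       * (\<Prod>j\<in>{..<m}-{i}. (cnode m l - cnode m j)))"
  proof (rule sum.mono_neutral_right)
    show "\<forall>i\<in>{..<m} - {l}. f (cnode m i) / (\<Prod>j\<in>{..<m}-{i}. (cnode m i - cnode m j))
       * (\<Prod>j\<in>{..<m}-{i}. (cnode m l - cnode m j)) = 0"
    proof
      fix i assume "i \<in> {..<m} - {l}"
      then have "l \<in> {..<m}-{i}" using l by auto
      then have "(\<Prod>j\<in>{..<m}-{i}. (cnode m l - cnode m j)) = 0"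
        by (intro prod_zero) auto
      then show "f (cnode m i) / (\<Prod>j\<in>{..<m}-{i}. (cnode m i - cnode m j))
       * (\<Prod>j\<in>{..<m}-{i}. (cnode m l - cnode m j)) = 0" by simp
    qed
  qed (use l in auto)
  also have "\<dots> = f (cnode m l)"
  proof -
    have "(\<Prod>j\<in>{..<m}-{l}. (cnode m l - cnode m j)) \<noteq> 0"
      using cnode_inj[of m] l by (auto simp: inj_on_def)
    then show ?thesis by simp
  qed
  finally show ?thesis .
qed

lemma pderiv_iter_DERIV:
  "((\<lambda>x. poly ((pderiv ^^ j) p) x) has_real_derivative poly ((pderiv ^^ Suc j) p) x) (at x)"
  by simp

lemma cheb_interp:
  fixes D :: "nat \<Rightarrow> real \<Rightarrow> real"
  assumes m: "m \<ge> 1"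
    and der: "\<forall>j<m. \<forall>x\<in>{-1..1}. (D j has_real_derivative D (Suc j) x) (at x)"
    and bnd: "\<forall>x\<in>{-1..1}. \<bar>D m x\<bar> \<le> M"
  shows "\<exists>p. degree p < m \<and> (\<forall>t\<in>{-1..1}. \<bar>D 0 t - poly p t\<bar> \<le> M / (fact m * 2^(m-1)))"
proof (intro exI conjI ballI)
  define L where "L = lagr m (D 0)"
  show "degree L < m" using degree_lagr[OF m] by (simp add: L_def)
  have M0: "M \<ge> 0" using bnd[rule_format, of 0] by auto
  have den: "fact m * 2^(m-1) > (0::real)" by simp
  fix t :: real assume t: "t \<in> {-1..1}"
  show "\<bar>D 0 t - poly L t\<bar> \<le> M / (fact m * 2^(m-1))"
  proof (cases "poly (cheb m) t = 0")
    case True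
    then obtain l where "l < m" "t = cnode m l" using cheb_roots[OF m] by auto
    then have "D 0 t - poly L t = 0" using poly_lagr by (simp add: L_def)
    then show ?thesis using M0 den by simp
  next
    case False
    define c0 where "c0 = poly (cheb m) t"
    define c where "c = (D 0 t - poly L t) / c0"
    define h where "h j s = D j s - poly ((pderiv ^^ j) L) s - c * poly ((pderiv ^^ j) (cheb m)) s" for j s
    have hder: "\<forall>j<m. \<forall>x\<in>{-1..1}. (h j has_real_derivative h (Suc j) x) (at x)"
    proof (intro allI impI ballI)
      fix j and x :: real assume j: "j < m" and x: "x \<in> {-1..1}"
      show "(h j has_real_derivative h (Suc j) x) (at x)"
        unfolding h_def[abs_def]
        by (rule DERIV_diff[OF DERIV_diff[OF der[rule_format, OF j x] pderiv_iter_DERIV] DERIV_cmult[OF pderiv_iter_DERIV]])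
    qed
    define Z where "Z = insert t (cnode m ` {..<m})"
    have tZ: "t \<notin> cnode m ` {..<m}" using False cnode_root[OF m] by auto
    have "\<exists>\<xi>\<in>{-1..1}. h m \<xi> = 0"
    proof (rule gen_rolle[OF hder])
      show "finite Z" by (simp add: Z_def)
      show "card Z = Suc m" using tZ cnode_inj[of m] by (simp add: Z_def card_image)
      show "Z \<subseteq> {-1..1}" using t cnode_range by (auto simp: Z_def)
      show "\<forall>z\<in>Z. h 0 z = 0"
      proof
        fix z assume "z \<in> Z"
        then consider "z = t" | l where "l < m" "z = cnode m l" by (auto simp: Z_def)
        then show "h 0 z = 0"
        proof cases
          case 1 then show ?thesis using False by (simp add: h_def c_def c0_def)
        next
          case 2 then show ?thesis using poly_lagr[of l m "D 0"] cnode_root[OF m]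
            by (simp add: h_def L_def)
        qed
      qed
    qed
    then obtain \<xi> where xi: "\<xi> \<in> {-1..1}" "h m \<xi> = 0" by blast
    have "(pderiv ^^ m) L = 0" using degree_lagr[OF m] by (simp add: L_def pderiv_iter_small)
    moreover have "(pderiv ^^ m) (cheb m) = [:fact m * 2^(m-1):]"
      using pderiv_iter_top[of "cheb m" m] cheb_coeffs[of m] m by (simp add: degree_cheb)
    ultimately have "D m \<xi> = c * (fact m * 2^(m-1))" using xi by (simp add: h_def)
    then have cval: "c = D m \<xi> / (fact m * 2^(m-1))" using den by (simp add: field_simps)
    have "\<bar>D 0 t - poly L t\<bar> = \<bar>c\<bar> * \<bar>c0\<bar>" using False by (simp add: c_def c0_def abs_mult)
    also have "\<dots> \<le> \<bar>c\<bar> * 1" using cheb_bound[OF t] by (intro mult_left_mono) (auto simp: c0_def)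
    also have "\<dots> \<le> M / (fact m * 2^(m-1))"
      using cval bnd xi den by (simp add: abs_divide divide_right_mono)
    finally show ?thesis .
  qed
qed


lemma Re_real_deriv:
  assumes "(F has_field_derivative F') (at (of_real t))"
  shows "((\<lambda>s. Re (F (of_real s))) has_real_derivative Re F') (at t)"
proof -
  have "((\<lambda>s. F (of_real s)) has_vector_derivative F') (at t)"
    using has_vector_derivative_real_field[OF assms] .
  then have "((\<lambda>s. Re (F (of_real s))) has_vector_derivative Re F') (at t)"
    using bounded_linear.has_vector_derivative[OF bounded_linear_Re] by blast
  then show ?thesis by (simp add: has_real_derivative_iff_has_vector_derivative)
qed

lemma gauss_derivs:
  fixes \<sigma> x r :: real assumes r: "r > 0"
  shows "\<exists>D. D 0 = (\<lambda>t. exp (- (\<sigma>\<^sup>2) * (x - t)\<^sup>2)) \<and>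
     (\<forall>j t. (D j has_real_derivative D (Suc j) t) (at t)) \<and>
     (\<forall>n t. \<bar>D n t\<bar> \<le> fact n * exp (\<sigma>\<^sup>2 * r\<^sup>2) / r^n)"
proof -
  define G where "G z = exp (- (of_real \<sigma>)\<^sup>2 * (of_real x - z)\<^sup>2)" for z :: complex
  have hol: "G holomorphic_on UNIV" unfolding G_def[abs_def] by (intro holomorphic_intros)
  have holj: "(deriv ^^ j) G holomorphic_on UNIV" for j
    using holomorphic_higher_deriv[OF hol] by simp
  have derj: "((deriv ^^ j) G has_field_derivative (deriv ^^ Suc j) G z) (at z)" for j z
  proof -
    have "(deriv ^^ j) G field_differentiable at z"
      using holj holomorphic_on_imp_differentiable_at by blast
    then show ?thesis using DERIV_deriv_iff_field_differentiable by force
  qed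
  define D where "D j t = Re ((deriv ^^ j) G (of_real t))" for j t
  show ?thesis
  proof (intro exI conjI allI)
    show "D 0 = (\<lambda>t. exp (- (\<sigma>\<^sup>2) * (x - t)\<^sup>2))"
    proof
      fix t
      have "G (of_real t) = of_real (exp (- (\<sigma>\<^sup>2) * (x - t)\<^sup>2))"
        by (simp add: G_def exp_of_real[symmetric])
      then show "D 0 t = exp (- (\<sigma>\<^sup>2) * (x - t)\<^sup>2)" by (simp add: D_def)
    qed
    fix j t
    show "(D j has_real_derivative D (Suc j) t) (at t)"
      unfolding D_def[abs_def] by (rule Re_real_deriv[OF derj])
  next
    fix n t
    have bnd: "norm (G w) \<le> exp (\<sigma>\<^sup>2 * r\<^sup>2)" if w: "norm (of_real t - w) = r" for w
    proof -
      have im: "\<bar>Im w\<bar> \<le> r"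
        using abs_Im_le_cmod[of "of_real t - w"] w by simp
      have "Re (- (of_real \<sigma>)\<^sup>2 * (of_real x - w)\<^sup>2) = - (\<sigma>\<^sup>2) * ((x - Re w)\<^sup>2 - (Im w)\<^sup>2)"
        by (simp add: power2_eq_square algebra_simps)
      also have "\<dots> \<le> \<sigma>\<^sup>2 * (Im w)\<^sup>2"
        by (simp add: algebra_simps)
      also have "\<dots> \<le> \<sigma>\<^sup>2 * r\<^sup>2"
      proof (intro mult_left_mono)
        show "(Im w)\<^sup>2 \<le> r\<^sup>2" using im r by (metis abs_le_square_iff abs_of_pos)
      qed simp
      finally show ?thesis by (simp add: G_def)
    qed
    have "norm ((deriv ^^ n) G (of_real t)) \<le> fact n * exp (\<sigma>\<^sup>2 * r\<^sup>2) / r^n"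
    proof (rule Cauchy_inequality[OF _ _ r])
      show "G holomorphic_on ball (of_real t) r" using hol by (rule holomorphic_on_subset) auto
      show "continuous_on (cball (of_real t) r) G"
        using holomorphic_on_imp_continuous_on[OF hol] continuous_on_subset by blast
    qed (use bnd in auto)
    then show "\<bar>D n t\<bar> \<le> fact n * exp (\<sigma>\<^sup>2 * r\<^sup>2) / r^n"
      unfolding D_def using abs_Re_le_cmod order_trans by blast
  qed
qed


lemma aux1: "\<bar>a::real\<bar> \<le> 1 + a\<^sup>2"
proof (cases "\<bar>a\<bar> \<le> 1")
  case False
  then have "\<bar>a\<bar> * 1 \<le> \<bar>a\<bar> * \<bar>a\<bar>" by (intro mult_left_mono) auto
  then show ?thesis by (simp add: power2_eq_square abs_mult_self_eq)
qed (use zero_le_power2[of a] in linarith)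
lemma aux2: "\<bar>(a::real) * b\<bar> \<le> a\<^sup>2 + b\<^sup>2"
proof -
  have "2 * \<bar>a\<bar> * \<bar>b\<bar> \<le> \<bar>a\<bar>\<^sup>2 + \<bar>b\<bar>\<^sup>2" by (rule sum_squares_bound)
  moreover have "0 \<le> \<bar>a\<bar> * \<bar>b\<bar>" by simp
  moreover have "\<bar>a * b\<bar> = \<bar>a\<bar> * \<bar>b\<bar>" by (simp add: abs_mult)
  ultimately show ?thesis by simp
qed

abbreviation "I11 \<equiv> {-1..1::real}"

lemma I11_lebesgue [simp]: "I11 \<in> sets lebesgue" by simp

lemma L2_meas: "L2_11 f \<Longrightarrow> f \<in> borel_measurable (lebesgue_on I11)"
  unfolding L2_11_def using measurable_on_iff_borel_measurable[of I11 f] by simp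

lemma L2_abs: "L2_11 f \<Longrightarrow> f absolutely_integrable_on I11"
proof -
  assume f: "L2_11 f"
  show ?thesis
  proof (rule measurable_bounded_by_integrable_imp_absolutely_integrable[OF L2_meas[OF f] I11_lebesgue])
    show "(\<lambda>x. 1 + (f x)\<^sup>2) integrable_on I11"
      using f unfolding L2_11_def by (intro integrable_add) auto
    fix x show "norm (f x) \<le> 1 + (f x)\<^sup>2"
      using aux1[of "f x"] by simp
  qed
qed

lemma L2_int: "L2_11 f \<Longrightarrow> f integrable_on I11"
  using L2_abs absolutely_integrable_on_def by blast

lemma L2_prod: "L2_11 f \<Longrightarrow> L2_11 g \<Longrightarrow> (\<lambda>x. f x * g x) absolutely_integrable_on I11"
proof -
  assume f: "L2_11 f" and g: "L2_11 g"
  show ?thesis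
  proof (rule measurable_bounded_by_integrable_imp_absolutely_integrable[OF _ I11_lebesgue])
    show "(\<lambda>x. f x * g x) \<in> borel_measurable (lebesgue_on I11)"
      using L2_meas[OF f] L2_meas[OF g] by measurable
    show "(\<lambda>x. (f x)\<^sup>2 + (g x)\<^sup>2) integrable_on I11"
      using f g unfolding L2_11_def by (intro integrable_add) auto
    fix x show "norm (f x * g x) \<le> (f x)\<^sup>2 + (g x)\<^sup>2"
      using aux2[of "f x" "g x"] by simp
  qed
qed

lemma L2_prod_int: "L2_11 f \<Longrightarrow> L2_11 g \<Longrightarrow> (\<lambda>x. f x * g x) integrable_on I11"
  using L2_prod absolutely_integrable_on_def by blast

lemma int_cmul: "f integrable_on S \<Longrightarrow> (\<lambda>x. (c::real) * f x) integrable_on S"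
  using integrable_cmul[of f S c] by simp

lemma cont_prod:
  fixes h f :: "real \<Rightarrow> real"
  assumes h: "continuous_on I11 h" and f: "f absolutely_integrable_on I11"
  shows "(\<lambda>x. h x * f x) absolutely_integrable_on I11"
proof (rule absolutely_integrable_bounded_measurable_product_real[OF _ I11_lebesgue _ f])
  show "h \<in> borel_measurable (lebesgue_on I11)"
    using continuous_imp_measurable_on_sets_lebesgue[OF h] by simp
  show "bounded (h ` I11)"
    using compact_continuous_image[OF h] compact_Icc compact_imp_bounded by blast
qed

lemma cont_prod_int:
  fixes h f :: "real \<Rightarrow> real"
  assumes h: "continuous_on I11 h" and f: "L2_11 f"
  shows "(\<lambda>x. h x * f x) integrable_on I11"
  using cont_prod[OF h L2_abs[OF f]] absolutely_integrable_on_def by blast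

lemma L2_sum:
  assumes fin: "finite I" and L: "\<And>i. i \<in> I \<Longrightarrow> L2_11 (\<phi> i)"
  shows "L2_11 (\<lambda>x. \<Sum>i\<in>I. c i * \<phi> i x)"
  unfolding L2_11_def
proof
  show "(\<lambda>x. \<Sum>i\<in>I. c i * \<phi> i x) measurable_on I11"
    using L fin by (intro measurable_on_sum measurable_on_cmul) (auto simp: L2_11_def)
  have e: "(\<lambda>x. (\<Sum>i\<in>I. c i * \<phi> i x)\<^sup>2) = (\<lambda>x. \<Sum>i\<in>I. \<Sum>j\<in>I. (c i * c j) * (\<phi> i x * \<phi> j x))"
    by (auto simp: power2_eq_square sum_product algebra_simps)
  show "(\<lambda>x. (\<Sum>i\<in>I. c i * \<phi> i x)\<^sup>2) integrable_on I11"
    unfolding e using fin L L2_prod_int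
    by (intro integrable_sum int_cmul) auto
qed

lemma orth_expand:
  assumes fin: "finite I" and L: "\<And>i. i \<in> I \<Longrightarrow> L2_11 (\<phi> i)"
    and on: "\<And>i j. i \<in> I \<Longrightarrow> j \<in> I \<Longrightarrow> integral I11 (\<lambda>x. \<phi> i x * \<phi> j x) = (if i = j then 1 else 0)"
  shows "integral I11 (\<lambda>x. (\<Sum>i\<in>I. a i * \<phi> i x) * (\<Sum>j\<in>I. b j * \<phi> j x)) = (\<Sum>i\<in>I. a i * b i)"
proof -
  have e: "(\<lambda>x. (\<Sum>i\<in>I. a i * \<phi> i x) * (\<Sum>j\<in>I. b j * \<phi> j x)) = (\<lambda>x. \<Sum>i\<in>I. \<Sum>j\<in>I. (a i * b j) * (\<phi> i x * \<phi> j x))"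
    by (auto simp: sum_product algebra_simps)
  have ij: "(\<lambda>x. (a i * b j) * (\<phi> i x * \<phi> j x)) integrable_on I11" if "i \<in> I" "j \<in> I" for i j
    using that L L2_prod_int int_cmul by blast
  have "integral I11 (\<lambda>x. \<Sum>i\<in>I. \<Sum>j\<in>I. (a i * b j) * (\<phi> i x * \<phi> j x))
      = (\<Sum>i\<in>I. integral I11 (\<lambda>x. \<Sum>j\<in>I. (a i * b j) * (\<phi> i x * \<phi> j x)))"
    using fin ij by (intro integral_sum integrable_sum) auto
  also have "\<dots> = (\<Sum>i\<in>I. \<Sum>j\<in>I. integral I11 (\<lambda>x. (a i * b j) * (\<phi> i x * \<phi> j x)))"
    using fin ij by (intro sum.cong refl integral_sum) auto
  also have "\<dots> = (\<Sum>i\<in>I. \<Sum>j\<in>I. (a i * b j) * integral I11 (\<lambda>x. \<phi> i x * \<phi> j x))"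
    by simp
  also have "\<dots> = (\<Sum>i\<in>I. \<Sum>j\<in>I. if j = i then a i * b j else 0)"
    using on by (intro sum.cong) auto
  also have "\<dots> = (\<Sum>i\<in>I. a i * b i)" using fin by (simp add: sum.delta)
  finally show ?thesis unfolding e .
qed


lemma exp_sums_real: "(\<lambda>n. y^n / fact n) sums exp (y::real)"
  using exp_converges[of y] by (simp add: divide_inverse_commute scaleR_conv_of_real divide_inverse)

lemma exp_tail:
  fixes R \<epsilon> :: real assumes R: "R \<ge> 0" and e: "\<epsilon> > 0"
  shows "\<exists>N. \<forall>y. \<bar>y\<bar> \<le> R \<longrightarrow> \<bar>exp y - (\<Sum>n<N. y^n / fact n)\<bar> \<le> \<epsilon>"
proof -
  define g where "g n = R^n / fact n" for n
  have gs: "g sums exp R" using exp_sums_real[of R] by (simp add: g_def[abs_def])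
  then have "(\<lambda>N. \<Sum>n<N. g n) \<longlonglongrightarrow> exp R" by (simp add: sums_def)
  then obtain N where N: "\<And>n. n \<ge> N \<Longrightarrow> norm ((\<Sum>i<n. g i) - exp R) < \<epsilon>"
    using e unfolding LIMSEQ_iff by blast
  show ?thesis
  proof (intro exI allI impI)
    fix y :: real assume y: "\<bar>y\<bar> \<le> R"
    define f where "f n = y^n / fact n" for n
    have fs: "summable f" using exp_sums_real[of y] sums_summable by (simp add: f_def[abs_def])
    have gsum: "summable g" using gs sums_summable by blast
    have fg: "\<bar>f n\<bar> \<le> g n" for n
      unfolding f_def g_def using y by (simp add: abs_divide power_abs divide_right_mono power_mono)
    have "exp y - (\<Sum>n<N. y^n / fact n) = (\<Sum>n. f (n + N))"
      using suminf_minus_initial_segment[OF fs, of N] exp_sums_real[of y] sums_unique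
      by (simp add: f_def[abs_def])
    also have "\<bar>\<dots>\<bar> \<le> (\<Sum>n. \<bar>f (n + N)\<bar>)"
    proof (rule summable_rabs)
      show "summable (\<lambda>n. \<bar>f (n + N)\<bar>)"
        using summable_ignore_initial_segment[OF gsum, of N] fg
        by (intro summable_rabs_comparison_test[where g="\<lambda>n. g (n + N)"]) auto
    qed
    also have "\<dots> \<le> (\<Sum>n. g (n + N))"
    proof (rule suminf_le)
      show "summable (\<lambda>n. \<bar>f (n + N)\<bar>)"
        using summable_ignore_initial_segment[OF gsum, of N] fg
        by (intro summable_rabs_comparison_test[where g="\<lambda>n. g (n + N)"]) auto
    qed (use fg summable_ignore_initial_segment[OF gsum, of N] in auto)
    also have "\<dots> = exp R - (\<Sum>i<N. g i)"
      using suminf_minus_initial_segment[OF gsum, of N] sums_unique[OF gs] by simp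
    also have "\<dots> \<le> \<epsilon>" using N[of N] by simp
    finally show "\<bar>exp y - (\<Sum>n<N. y^n / fact n)\<bar> \<le> \<epsilon>" .
  qed
qed


definition aN :: "real \<Rightarrow> nat \<Rightarrow> real \<Rightarrow> real" where
  "aN \<sigma> n x = exp (- (\<sigma>\<^sup>2) * x\<^sup>2) * x ^ n"
definition wN :: "real \<Rightarrow> nat \<Rightarrow> real" where
  "wN \<sigma> n = (2 * \<sigma>\<^sup>2) ^ n / fact n"

lemma kern_approx:
  assumes e: "\<epsilon> > 0"
  shows "\<exists>N. \<forall>x\<in>I11. \<forall>t\<in>I11. \<bar>gauss_kernel \<sigma> x t - (\<Sum>n<N. wN \<sigma> n * aN \<sigma> n x * aN \<sigma> n t)\<bar> \<le> \<epsilon>"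
proof -
  obtain N where N: "\<And>y. \<bar>y\<bar> \<le> 2 * \<sigma>\<^sup>2 \<Longrightarrow> \<bar>exp y - (\<Sum>n<N. y^n / fact n)\<bar> \<le> \<epsilon>"
    using exp_tail[of "2 * \<sigma>\<^sup>2" \<epsilon>] e by auto
  show ?thesis
  proof (intro exI ballI)
    fix x t :: real assume x: "x \<in> I11" and t: "t \<in> I11"
    define y where "y = 2 * \<sigma>\<^sup>2 * x * t"
    define c where "c = exp (- (\<sigma>\<^sup>2) * x\<^sup>2) * exp (- (\<sigma>\<^sup>2) * t\<^sup>2)"
    have "\<bar>x\<bar> * \<bar>t\<bar> \<le> 1 * 1" using x t by (intro mult_mono) auto
    then have xt: "\<bar>x * t\<bar> \<le> 1" by (simp add: abs_mult)
    have "\<bar>y\<bar> = (2 * \<sigma>\<^sup>2) * \<bar>x * t\<bar>" unfolding y_def by (simp add: abs_mult mult.assoc)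
    also have "\<dots> \<le> (2 * \<sigma>\<^sup>2) * 1" using xt by (intro mult_left_mono) auto
    finally have yb: "\<bar>y\<bar> \<le> 2 * \<sigma>\<^sup>2" by simp
    have arg: "- (\<sigma>\<^sup>2) * (x - t)\<^sup>2 = (- (\<sigma>\<^sup>2) * x\<^sup>2 + - (\<sigma>\<^sup>2) * t\<^sup>2) + y"
      unfolding y_def power2_eq_square by algebra
    have k: "gauss_kernel \<sigma> x t = c * exp y"
      unfolding gauss_kernel_def arg exp_add c_def ..
    have trm: "wN \<sigma> n * aN \<sigma> n x * aN \<sigma> n t = c * (y^n / fact n)" for n
      unfolding wN_def aN_def c_def y_def power_mult_distrib by (simp add: field_simps)
    have s: "(\<Sum>n<N. wN \<sigma> n * aN \<sigma> n x * aN \<sigma> n t) = c * (\<Sum>n<N. y^n / fact n)"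
      unfolding trm sum_distrib_left ..
    have "- (\<sigma>\<^sup>2) * x\<^sup>2 + - (\<sigma>\<^sup>2) * t\<^sup>2 \<le> 0"
      using mult_nonneg_nonneg[OF zero_le_power2[of \<sigma>] zero_le_power2[of x]]
        mult_nonneg_nonneg[OF zero_le_power2[of \<sigma>] zero_le_power2[of t]] by linarith
    then have c1: "\<bar>c\<bar> \<le> 1" unfolding c_def exp_add[symmetric] by simp
    have "\<bar>gauss_kernel \<sigma> x t - (\<Sum>n<N. wN \<sigma> n * aN \<sigma> n x * aN \<sigma> n t)\<bar>
        = \<bar>c\<bar> * \<bar>exp y - (\<Sum>n<N. y^n / fact n)\<bar>"
      unfolding k s abs_mult[symmetric] right_diff_distrib ..
    also have "\<dots> \<le> 1 * \<epsilon>" using c1 N[OF yb] by (intro mult_mono) auto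
    finally show "\<bar>gauss_kernel \<sigma> x t - (\<Sum>n<N. wN \<sigma> n * aN \<sigma> n x * aN \<sigma> n t)\<bar> \<le> \<epsilon>" by simp
  qed
qed

lemma cont_kernel: "continuous_on I11 (gauss_kernel \<sigma> x)"
  unfolding gauss_kernel_def by (intro continuous_intros)

lemma cont_aN: "continuous_on I11 (aN \<sigma> n)"
  unfolding aN_def by (intro continuous_intros)

lemma op_integrable: "L2_11 \<phi> \<Longrightarrow> (\<lambda>t. gauss_kernel \<sigma> x t * \<phi> t) integrable_on I11"
  using cont_prod_int[OF cont_kernel] by blast

lemma aN_integrable: "L2_11 \<phi> \<Longrightarrow> (\<lambda>t. aN \<sigma> n t * \<phi> t) integrable_on I11"
  using cont_prod_int[OF cont_aN] by blast

lemma abs_L2_integrable: "L2_11 \<phi> \<Longrightarrow> (\<lambda>t. \<bar>\<phi> t\<bar>) integrable_on I11"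
  using L2_abs absolutely_integrable_on_def by (metis (no_types, lifting) integrable_eq real_norm_def)

definition TN :: "real \<Rightarrow> nat \<Rightarrow> (real \<Rightarrow> real) \<Rightarrow> real \<Rightarrow> real" where
  "TN \<sigma> N \<phi> x = (\<Sum>n<N. wN \<sigma> n * aN \<sigma> n x * integral I11 (\<lambda>t. aN \<sigma> n t * \<phi> t))"

lemma op_diff:
  assumes \<phi>: "L2_11 \<phi>" and x: "x \<in> I11"
    and K: "\<forall>t\<in>I11. \<bar>gauss_kernel \<sigma> x t - (\<Sum>n<N. wN \<sigma> n * aN \<sigma> n x * aN \<sigma> n t)\<bar> \<le> \<epsilon>"
  shows "\<bar>gauss_op \<sigma> \<phi> x - TN \<sigma> N \<phi> x\<bar> \<le> \<epsilon> * integral I11 (\<lambda>t. \<bar>\<phi> t\<bar>)"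
proof -
  define KN where "KN t = (\<Sum>n<N. wN \<sigma> n * aN \<sigma> n x * aN \<sigma> n t)" for t
  have i1: "(\<lambda>t. wN \<sigma> n * aN \<sigma> n x * (aN \<sigma> n t * \<phi> t)) integrable_on I11" for n
    using aN_integrable[OF \<phi>] int_cmul by blast
  have "TN \<sigma> N \<phi> x = integral I11 (\<lambda>t. \<Sum>n<N. wN \<sigma> n * aN \<sigma> n x * (aN \<sigma> n t * \<phi> t))"
    unfolding TN_def using i1 by (subst integral_sum) auto
  also have "\<dots> = integral I11 (\<lambda>t. KN t * \<phi> t)"
    by (simp add: KN_def sum_distrib_right mult.assoc)
  finally have tn: "TN \<sigma> N \<phi> x = integral I11 (\<lambda>t. KN t * \<phi> t)" .
  have i2: "(\<lambda>t. KN t * \<phi> t) integrable_on I11"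
    unfolding KN_def sum_distrib_right using i1 by (intro integrable_sum) (auto simp: mult.assoc)
  have "gauss_op \<sigma> \<phi> x - TN \<sigma> N \<phi> x = integral I11 (\<lambda>t. (gauss_kernel \<sigma> x t - KN t) * \<phi> t)"
    unfolding tn gauss_op_def left_diff_distrib
    by (rule integral_diff[symmetric, OF op_integrable[OF \<phi>] i2])
  also have "\<bar>\<dots>\<bar> \<le> integral I11 (\<lambda>t. \<epsilon> * \<bar>\<phi> t\<bar>)"
  proof (rule integral_norm_bound_integral[where f="\<lambda>t. (gauss_kernel \<sigma> x t - KN t) * \<phi> t", simplified])
    show "(\<lambda>t. (gauss_kernel \<sigma> x t - KN t) * \<phi> t) integrable_on I11"
      unfolding left_diff_distrib by (intro integrable_diff op_integrable[OF \<phi>] i2)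
    show "(\<lambda>t. \<epsilon> * \<bar>\<phi> t\<bar>) integrable_on I11" using abs_L2_integrable[OF \<phi>] int_cmul by blast
    fix t assume t: "t \<in> I11"
    show "\<bar>(gauss_kernel \<sigma> x t - KN t) * \<phi> t\<bar> \<le> \<epsilon> * \<bar>\<phi> t\<bar>"
      using K t unfolding KN_def abs_mult by (intro mult_right_mono) auto
  qed
  also have "\<dots> = \<epsilon> * integral I11 (\<lambda>t. \<bar>\<phi> t\<bar>)" by simp
  finally show ?thesis .
qed


lemma TN_integrable:
  assumes \<phi>: "L2_11 \<phi>" and \<psi>: "L2_11 \<psi>"
  shows "(\<lambda>x. \<psi> x * TN \<sigma> N \<phi> x) integrable_on I11"
    and "integral I11 (\<lambda>x. \<psi> x * TN \<sigma> N \<phi> x) =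
      (\<Sum>n<N. wN \<sigma> n * integral I11 (\<lambda>x. aN \<sigma> n x * \<psi> x) * integral I11 (\<lambda>t. aN \<sigma> n t * \<phi> t))"
proof -
  have e: "(\<lambda>x. \<psi> x * TN \<sigma> N \<phi> x) = (\<lambda>x. \<Sum>n<N. (wN \<sigma> n * integral I11 (\<lambda>t. aN \<sigma> n t * \<phi> t)) * (aN \<sigma> n x * \<psi> x))"
    by (auto simp: TN_def sum_distrib_left algebra_simps)
  have i: "(\<lambda>x. (wN \<sigma> n * integral I11 (\<lambda>t. aN \<sigma> n t * \<phi> t)) * (aN \<sigma> n x * \<psi> x)) integrable_on I11" for n
    using aN_integrable[OF \<psi>] int_cmul by blast
  show "(\<lambda>x. \<psi> x * TN \<sigma> N \<phi> x) integrable_on I11"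
    unfolding e using i by (intro integrable_sum) auto
  have "integral I11 (\<lambda>x. \<psi> x * TN \<sigma> N \<phi> x) =
     (\<Sum>n<N. integral I11 (\<lambda>x. (wN \<sigma> n * integral I11 (\<lambda>t. aN \<sigma> n t * \<phi> t)) * (aN \<sigma> n x * \<psi> x)))"
    unfolding e using i by (intro integral_sum) auto
  also have "\<dots> = (\<Sum>n<N. (wN \<sigma> n * integral I11 (\<lambda>t. aN \<sigma> n t * \<phi> t)) * integral I11 (\<lambda>x. aN \<sigma> n x * \<psi> x))"
    by (intro sum.cong refl Henstock_Kurzweil_Integration.integral_mult_right)
  also have "\<dots> = (\<Sum>n<N. wN \<sigma> n * integral I11 (\<lambda>x. aN \<sigma> n x * \<psi> x) * integral I11 (\<lambda>t. aN \<sigma> n t * \<phi> t))"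
    by (intro sum.cong refl) (simp only: mult_ac)
  finally show "integral I11 (\<lambda>x. \<psi> x * TN \<sigma> N \<phi> x) =
      (\<Sum>n<N. wN \<sigma> n * integral I11 (\<lambda>x. aN \<sigma> n x * \<psi> x) * integral I11 (\<lambda>t. aN \<sigma> n t * \<phi> t))" .
qed

lemma near_bound:
  assumes \<phi>: "L2_11 \<phi>" and \<psi>: "L2_11 \<psi>"
    and i\<phi>: "(\<lambda>x. \<psi> x * gauss_op \<sigma> \<phi> x) integrable_on I11"
    and b: "\<forall>x\<in>I11. \<bar>gauss_op \<sigma> \<phi> x - TN \<sigma> N \<phi> x\<bar> \<le> e"
  shows "\<bar>integral I11 (\<lambda>x. \<psi> x * gauss_op \<sigma> \<phi> x) - integral I11 (\<lambda>x. \<psi> x * TN \<sigma> N \<phi> x)\<bar>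
     \<le> e * integral I11 (\<lambda>x. \<bar>\<psi> x\<bar>)"
proof -
  have "integral I11 (\<lambda>x. \<psi> x * gauss_op \<sigma> \<phi> x) - integral I11 (\<lambda>x. \<psi> x * TN \<sigma> N \<phi> x)
      = integral I11 (\<lambda>x. \<psi> x * gauss_op \<sigma> \<phi> x - \<psi> x * TN \<sigma> N \<phi> x)"
    by (rule integral_diff[symmetric, OF i\<phi> TN_integrable(1)[OF \<phi> \<psi>]])
  also have "\<bar>\<dots>\<bar> \<le> integral I11 (\<lambda>x. e * \<bar>\<psi> x\<bar>)"
  proof (rule integral_norm_bound_integral[where f="\<lambda>x. \<psi> x * gauss_op \<sigma> \<phi> x - \<psi> x * TN \<sigma> N \<phi> x", simplified])
    show "(\<lambda>x. \<psi> x * gauss_op \<sigma> \<phi> x - \<psi> x * TN \<sigma> N \<phi> x) integrable_on I11"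
      by (intro integrable_diff i\<phi> TN_integrable(1)[OF \<phi> \<psi>])
    show "(\<lambda>x. e * \<bar>\<psi> x\<bar>) integrable_on I11" using abs_L2_integrable[OF \<psi>] int_cmul by blast
    fix x assume x: "x \<in> I11"
    have "\<bar>\<psi> x * gauss_op \<sigma> \<phi> x - \<psi> x * TN \<sigma> N \<phi> x\<bar> = \<bar>\<psi> x\<bar> * \<bar>gauss_op \<sigma> \<phi> x - TN \<sigma> N \<phi> x\<bar>"
      by (simp add: abs_mult[symmetric] right_diff_distrib)
    also have "\<dots> \<le> \<bar>\<psi> x\<bar> * e" using b x by (intro mult_left_mono) auto
    finally show "\<bar>\<psi> x * gauss_op \<sigma> \<phi> x - \<psi> x * TN \<sigma> N \<phi> x\<bar> \<le> e * \<bar>\<psi> x\<bar>" by (simp add: mult.commute)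
  qed
  also have "\<dots> = e * integral I11 (\<lambda>x. \<bar>\<psi> x\<bar>)" by simp
  finally show ?thesis .
qed

lemma sym_form:
  assumes \<phi>: "L2_11 \<phi>" and \<psi>: "L2_11 \<psi>"
    and i\<phi>: "(\<lambda>x. \<psi> x * gauss_op \<sigma> \<phi> x) integrable_on I11"
    and i\<psi>: "(\<lambda>x. \<phi> x * gauss_op \<sigma> \<psi> x) integrable_on I11"
  shows "integral I11 (\<lambda>x. \<psi> x * gauss_op \<sigma> \<phi> x) = integral I11 (\<lambda>x. \<phi> x * gauss_op \<sigma> \<psi> x)"
proof -
  define A where "A = integral I11 (\<lambda>x. \<psi> x * gauss_op \<sigma> \<phi> x)"
  define A' where "A' = integral I11 (\<lambda>x. \<phi> x * gauss_op \<sigma> \<psi> x)"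
  define C\<phi> where "C\<phi> = integral I11 (\<lambda>x. \<bar>\<phi> x\<bar>)"
  define C\<psi> where "C\<psi> = integral I11 (\<lambda>x. \<bar>\<psi> x\<bar>)"
  have C\<phi>0: "C\<phi> \<ge> 0" unfolding C\<phi>_def by (rule integral_nonneg[OF abs_L2_integrable[OF \<phi>]]) auto
  have C\<psi>0: "C\<psi> \<ge> 0" unfolding C\<psi>_def by (rule integral_nonneg[OF abs_L2_integrable[OF \<psi>]]) auto
  have key: "\<bar>A - A'\<bar> \<le> 2 * \<epsilon> * C\<phi> * C\<psi>" if e: "\<epsilon> > 0" for \<epsilon>
  proof -
    obtain N where N: "\<forall>x\<in>I11. \<forall>t\<in>I11. \<bar>gauss_kernel \<sigma> x t - (\<Sum>n<N. wN \<sigma> n * aN \<sigma> n x * aN \<sigma> n t)\<bar> \<le> \<epsilon>"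
      using kern_approx[OF e] by blast
    have b\<phi>: "\<forall>x\<in>I11. \<bar>gauss_op \<sigma> \<phi> x - TN \<sigma> N \<phi> x\<bar> \<le> \<epsilon> * C\<phi>"
      using op_diff[OF \<phi>] N unfolding C\<phi>_def by blast
    have b\<psi>: "\<forall>x\<in>I11. \<bar>gauss_op \<sigma> \<psi> x - TN \<sigma> N \<psi> x\<bar> \<le> \<epsilon> * C\<psi>"
      using op_diff[OF \<psi>] N unfolding C\<psi>_def by blast
    have 1: "\<bar>A - integral I11 (\<lambda>x. \<psi> x * TN \<sigma> N \<phi> x)\<bar> \<le> \<epsilon> * C\<phi> * C\<psi>"
      using near_bound[OF \<phi> \<psi> i\<phi> b\<phi>] unfolding A_def C\<psi>_def by simp
    have 2: "\<bar>A' - integral I11 (\<lambda>x. \<phi> x * TN \<sigma> N \<psi> x)\<bar> \<le> \<epsilon> * C\<psi> * C\<phi>"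
      using near_bound[OF \<psi> \<phi> i\<psi> b\<psi>] unfolding A'_def C\<phi>_def by simp
    have 3: "integral I11 (\<lambda>x. \<psi> x * TN \<sigma> N \<phi> x) = integral I11 (\<lambda>x. \<phi> x * TN \<sigma> N \<psi> x)"
      unfolding TN_integrable(2)[OF \<phi> \<psi>] TN_integrable(2)[OF \<psi> \<phi>]
      by (intro sum.cong refl) simp
    show ?thesis using 1 2 3 by (simp add: algebra_simps)
  qed
  show ?thesis
  proof (rule ccontr)
    assume "\<not> ?thesis"
    then have d: "\<bar>A - A'\<bar> > 0" unfolding A_def A'_def by simp
    define \<epsilon> where "\<epsilon> = \<bar>A - A'\<bar> / (4 * (C\<phi> * C\<psi> + 1))"
    have pos: "C\<phi> * C\<psi> + 1 > 0" using C\<phi>0 C\<psi>0 by (simp add: add_nonneg_pos)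
    have e: "\<epsilon> > 0" using d pos by (simp add: \<epsilon>_def)
    have "2 * \<epsilon> * C\<phi> * C\<psi> < \<bar>A - A'\<bar>"
    proof -
      have "2 * \<epsilon> * C\<phi> * C\<psi> = \<bar>A - A'\<bar> * (2 * (C\<phi> * C\<psi>) / (4 * (C\<phi> * C\<psi> + 1)))"
        by (simp add: \<epsilon>_def field_simps)
      also have "\<dots> < \<bar>A - A'\<bar> * 1"
        using d pos C\<phi>0 C\<psi>0 by (intro mult_strict_left_mono) (auto simp: field_simps)
      finally show ?thesis by simp
    qed
    then show False using key[OF e] by linarith
  qed
qed


lemma sum_reindex_skip:
  fixes f :: "nat \<Rightarrow> real"
  assumes p: "p < Suc k'"
  shows "(\<Sum>i<Suc k'. f i) = f p + (\<Sum>i<k'. f (if i < p then i else Suc i))"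
proof -
  define s where "s i = (if i < p then i else Suc i)" for i
  have inj: "inj_on s {..<k'}" by (auto simp: inj_on_def s_def split: if_splits)
  have img: "s ` {..<k'} = {..<Suc k'} - {p}"
  proof
    show "s ` {..<k'} \<subseteq> {..<Suc k'} - {p}" by (auto simp: s_def split: if_splits)
    show "{..<Suc k'} - {p} \<subseteq> s ` {..<k'}"
    proof
      fix i assume i: "i \<in> {..<Suc k'} - {p}"
      show "i \<in> s ` {..<k'}"
      proof (cases "i < p")
        case True then show ?thesis using i p by (auto simp: s_def image_iff intro!: bexI[of _ i])
      next
        case False then have "i > p" using i by auto
        then show ?thesis using i by (auto simp: s_def image_iff intro!: bexI[of _ "i - 1"])
      qed
    qed
  qed
  have "(\<Sum>i<Suc k'. f i) = f p + (\<Sum>i\<in>{..<Suc k'} - {p}. f i)"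
    using p by (intro sum.remove) auto
  also have "(\<Sum>i\<in>{..<Suc k'} - {p}. f i) = (\<Sum>i<k'. f (s i))"
    unfolding img[symmetric] using sum.reindex[OF inj, of f] by simp
  finally show ?thesis by (simp add: s_def)
qed

lemma lin_solve:
  "m < k \<Longrightarrow> \<exists>c::nat\<Rightarrow>real. (\<exists>i<k. c i \<noteq> 0) \<and> (\<forall>j<m. (\<Sum>i<k. A j i * c i) = 0)"
proof (induction m arbitrary: k A)
  case 0
  then show ?case by (intro exI[of _ "\<lambda>i. if i = 0 then 1 else 0"]) auto
next
  case (Suc m)
  show ?case
  proof (cases "\<forall>i<k. A m i = 0")
    case True
    obtain c where c: "\<exists>i<k. c i \<noteq> 0" "\<forall>j<m. (\<Sum>i<k. A j i * c i) = 0"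
      using Suc.IH[of k A] Suc.prems by auto
    show ?thesis
    proof (rule exI[of _ c], intro conjI allI impI)
      show "\<exists>i<k. c i \<noteq> 0" by fact
      fix j assume "j < Suc m"
      then consider "j < m" | "j = m" by linarith
      then show "(\<Sum>i<k. A j i * c i) = 0"
        by cases (use c True in auto)
    qed
  next
    case False
    then obtain p where p: "p < k" "A m p \<noteq> 0" by auto
    obtain k' where k': "k = Suc k'" using Suc.prems by (cases k) auto
    define s where "s i = (if i < p then i else Suc i)" for i
    define B where "B j i = A j (s i) - A j p * A m (s i) / A m p" for j i
    obtain c' where c': "\<exists>i<k'. c' i \<noteq> 0" "\<forall>j<m. (\<Sum>i<k'. B j i * c' i) = 0"
      using Suc.IH[of k' B] Suc.prems k' by auto
    define S where "S = (\<Sum>i<k'. A m (s i) * c' i)"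
    define c where "c i = (if i = p then - S / A m p else if i < p then c' i else c' (i - 1))" for i
    have cs: "c (s i) = c' i" for i by (auto simp: c_def s_def)
    have sum_eq: "(\<Sum>i<k. A j i * c i) = A j p * c p + (\<Sum>i<k'. A j (s i) * c' i)" for j
      using sum_reindex_skip[of p k' "\<lambda>i. A j i * c i"] p k' cs by (simp add: s_def)
    show ?thesis
    proof (rule exI[of _ c], intro conjI allI impI)
      obtain i0 where i0: "i0 < k'" "c' i0 \<noteq> 0" using c' by auto
      have "s i0 < k" using i0 k' by (auto simp: s_def)
      then show "\<exists>i<k. c i \<noteq> 0" using i0 cs by metis
      fix j assume j: "j < Suc m"
      then consider "j < m" | "j = m" by linarith
      then show "(\<Sum>i<k. A j i * c i) = 0"
      proof cases
        case 2
        then show ?thesis using p unfolding sum_eq by (simp add: c_def S_def)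
      next
        case 1
        have "(\<Sum>i<k'. B j i * c' i) = (\<Sum>i<k'. A j (s i) * c' i) - A j p / A m p * S"
          by (simp add: B_def S_def left_diff_distrib sum_subtractf sum_distrib_left algebra_simps)
        then have "(\<Sum>i<k'. A j (s i) * c' i) = A j p / A m p * S" using c' 1 by auto
        then show ?thesis unfolding sum_eq by (simp add: c_def)
      qed
    qed
  qed
qed


lemma eig_L2: "in_eigenspace \<sigma> \<mu> \<phi> \<Longrightarrow> L2_11 \<phi>"
  by (simp add: in_eigenspace_def)

lemma eig_apply:
  assumes e: "in_eigenspace \<sigma> \<mu> \<phi>" and \<psi>: "L2_11 \<psi>"
  shows "(\<lambda>x. \<psi> x * gauss_op \<sigma> \<phi> x) integrable_on I11"
    and "integral I11 (\<lambda>x. \<psi> x * gauss_op \<sigma> \<phi> x) = \<mu> * integral I11 (\<lambda>x. \<psi> x * \<phi> x)"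
proof -
  have \<phi>: "L2_11 \<phi>" and neg: "negligible {x \<in> I11. gauss_op \<sigma> \<phi> x \<noteq> \<mu> * \<phi> x}"
    using e by (auto simp: in_eigenspace_def)
  have i: "(\<lambda>x. \<mu> * (\<psi> x * \<phi> x)) integrable_on I11"
    using L2_prod_int[OF \<psi> \<phi>] int_cmul by blast
  have eq: "\<psi> x * gauss_op \<sigma> \<phi> x = \<mu> * (\<psi> x * \<phi> x)" if "x \<in> I11 - {x \<in> I11. gauss_op \<sigma> \<phi> x \<noteq> \<mu> * \<phi> x}" for x
    using that by auto
  show "(\<lambda>x. \<psi> x * gauss_op \<sigma> \<phi> x) integrable_on I11"
    by (rule integrable_spike[OF i neg eq])
  have "integral I11 (\<lambda>x. \<mu> * (\<psi> x * \<phi> x)) = integral I11 (\<lambda>x. \<psi> x * gauss_op \<sigma> \<phi> x)"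
    by (rule integral_spike[OF neg eq])
  then show "integral I11 (\<lambda>x. \<psi> x * gauss_op \<sigma> \<phi> x) = \<mu> * integral I11 (\<lambda>x. \<psi> x * \<phi> x)"
    by simp
qed

lemma eig_orth:
  assumes e1: "in_eigenspace \<sigma> \<mu> \<phi>" and e2: "in_eigenspace \<sigma> \<nu> \<psi>" and ne: "\<mu> \<noteq> \<nu>"
  shows "integral I11 (\<lambda>x. \<phi> x * \<psi> x) = 0"
proof -
  have \<phi>: "L2_11 \<phi>" and \<psi>: "L2_11 \<psi>" using e1 e2 by (auto simp: in_eigenspace_def)
  have "\<mu> * integral I11 (\<lambda>x. \<psi> x * \<phi> x) = \<nu> * integral I11 (\<lambda>x. \<phi> x * \<psi> x)"
    using sym_form[OF \<phi> \<psi> eig_apply(1)[OF e1 \<psi>] eig_apply(1)[OF e2 \<phi>]]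
      eig_apply(2)[OF e1 \<psi>] eig_apply(2)[OF e2 \<phi>] by simp
  then have "(\<mu> - \<nu>) * integral I11 (\<lambda>x. \<phi> x * \<psi> x) = 0"
    by (simp add: mult.commute[of "\<psi> _"] left_diff_distrib)
  then show ?thesis using ne by simp
qed

lemma fam_exists:
  assumes "enat n \<le> eig_mult \<sigma> v"
  shows "\<exists>\<phi>. (\<forall>i<n. in_eigenspace \<sigma> v (\<phi> i)) \<and>
      (\<forall>i<n. \<forall>j<n. integral I11 (\<lambda>x. \<phi> i x * \<phi> j x) = (if i = j then 1 else 0))"
proof (cases n)
  case 0 then show ?thesis by auto
next
  case (Suc n')
  then have "enat n' < eig_mult \<sigma> v" using assms
    by (metis enat_ord_simps(2) lessI order_less_le_trans)
  then obtain x where x: "x \<in> {enat n | n. \<exists>\<phi> :: nat \<Rightarrow> real \<Rightarrow> real.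
      (\<forall>i<n. in_eigenspace \<sigma> v (\<phi> i)) \<and>
      (\<forall>i<n. \<forall>j<n. integral {-1..1} (\<lambda>x. \<phi> i x * \<phi> j x) = (if i = j then 1 else 0))}" "enat n' < x"
    unfolding eig_mult_def less_Sup_iff by blast
  then obtain n'' \<phi> where "x = enat n''" and f: "(\<forall>i<n''. in_eigenspace \<sigma> v (\<phi> i)) \<and>
      (\<forall>i<n''. \<forall>j<n''. integral {-1..1} (\<lambda>x. \<phi> i x * \<phi> j x) = (if i = j then 1 else 0))"
    by blast
  then have "n \<le> n''" using x Suc by simp
  then show ?thesis using f by (intro exI[of _ \<phi>]) auto
qed

lemma mono_lam:
  assumes "\<forall>k\<ge>1. lam (Suc k) \<le> (lam k :: real)" "1 \<le> j" "j \<le> k"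
  shows "lam k \<le> lam j"
  using assms(3)
proof (induction k rule: dec_induct)
  case (step n) then show ?case using assms(1,2) by (meson order_trans)
qed simp


lemma get_family:
  assumes seq: "is_eigenvalue_seq \<sigma> lam" and k: "k \<ge> 1" and pos: "lam k > 0"
  shows "\<exists>\<Phi> \<mu>. (\<forall>i<k. in_eigenspace \<sigma> (\<mu> i) (\<Phi> i) \<and> lam k \<le> \<mu> i) \<and>
     (\<forall>i<k. \<forall>i'<k. integral I11 (\<lambda>x. \<Phi> i x * \<Phi> i' x) = (if i = i' then 1 else 0))"
proof -
  have mono: "\<forall>k\<ge>1. lam (Suc k) \<le> lam k" and mult: "\<And>\<mu>. \<mu> \<noteq> 0 \<Longrightarrow>
        eig_mult \<sigma> \<mu> = (if finite {k. k \<ge> 1 \<and> lam k = \<mu>}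
                           then enat (card {k. k \<ge> 1 \<and> lam k = \<mu>}) else \<infinity>)"
    using seq by (auto simp: is_eigenvalue_seq_def)
  have ge: "lam k \<le> lam j" if "1 \<le> j" "j \<le> k" for j using mono_lam[OF mono that] .
  define cnt where "cnt v = card {i. 1 \<le> i \<and> i \<le> k \<and> lam i = v}" for v
  have cnt_le: "enat (cnt v) \<le> eig_mult \<sigma> v" if v: "v \<noteq> 0" for v
  proof (cases "finite {k. k \<ge> 1 \<and> lam k = v}")
    case True
    have "cnt v \<le> card {k. k \<ge> 1 \<and> lam k = v}"
      unfolding cnt_def by (intro card_mono True) auto
    then show ?thesis using mult[OF v] True by simp
  next
    case False then show ?thesis using mult[OF v] by simp
  qed
  have "\<forall>v\<in>lam ` {1..k}. \<exists>\<phi>. (\<forall>i<cnt v. in_eigenspace \<sigma> v (\<phi> i)) \<and>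
      (\<forall>i<cnt v. \<forall>j<cnt v. integral I11 (\<lambda>x. \<phi> i x * \<phi> j x) = (if i = j then 1 else 0))"
  proof
    fix v assume "v \<in> lam ` {1..k}"
    then obtain j where "1 \<le> j" "j \<le> k" "v = lam j" by auto
    then have "v \<noteq> 0" using ge[of j] pos by auto
    then show "\<exists>\<phi>. (\<forall>i<cnt v. in_eigenspace \<sigma> v (\<phi> i)) \<and>
      (\<forall>i<cnt v. \<forall>j<cnt v. integral I11 (\<lambda>x. \<phi> i x * \<phi> j x) = (if i = j then 1 else 0))"
      using fam_exists[OF cnt_le] by blast
  qed
  from bchoice[OF this] obtain F where F0: "\<forall>v\<in>lam ` {1..k}. (\<forall>i<cnt v. in_eigenspace \<sigma> v (F v i)) \<and>
      (\<forall>i<cnt v. \<forall>j<cnt v. integral I11 (\<lambda>x. F v i x * F v j x) = (if i = j then 1 else 0))" ..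
  have F: "(\<forall>i<cnt v. in_eigenspace \<sigma> v (F v i)) \<and>
      (\<forall>i<cnt v. \<forall>j<cnt v. integral I11 (\<lambda>x. F v i x * F v j x) = (if i = j then 1 else 0))"
    if "v \<in> lam ` {1..k}" for v using F0 that by blast
  define pos where "pos j = card {i. 1 \<le> i \<and> i < j \<and> lam i = lam j}" for j
  have pos_lt: "pos j < cnt (lam j)" if j: "1 \<le> j" "j \<le> k" for j
    unfolding pos_def cnt_def
  proof (rule psubset_card_mono)
    show "finite {i. 1 \<le> i \<and> i \<le> k \<and> lam i = lam j}"
      by (rule finite_subset[of _ "{..k}"]) auto
    have "{i. 1 \<le> i \<and> i < j \<and> lam i = lam j} \<subseteq> {i. 1 \<le> i \<and> i \<le> k \<and> lam i = lam j}"
      using j by auto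
    moreover have "j \<in> {i. 1 \<le> i \<and> i \<le> k \<and> lam i = lam j}" "j \<notin> {i. 1 \<le> i \<and> i < j \<and> lam i = lam j}"
      using j by auto
    ultimately show "{i. 1 \<le> i \<and> i < j \<and> lam i = lam j} \<subset> {i. 1 \<le> i \<and> i \<le> k \<and> lam i = lam j}"
      by blast
  qed
  have pos_mono: "pos j < pos j'" if j: "1 \<le> j" "j < j'" "lam j = lam j'" for j j'
    unfolding pos_def
  proof (rule psubset_card_mono)
    show "finite {i. 1 \<le> i \<and> i < j' \<and> lam i = lam j'}"
      by (rule finite_subset[of _ "{..j'}"]) auto
    have "{i. 1 \<le> i \<and> i < j \<and> lam i = lam j} \<subseteq> {i. 1 \<le> i \<and> i < j' \<and> lam i = lam j'}"
      using j by auto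
    moreover have "j \<in> {i. 1 \<le> i \<and> i < j' \<and> lam i = lam j'}" "j \<notin> {i. 1 \<le> i \<and> i < j \<and> lam i = lam j}"
      using j by auto
    ultimately show "{i. 1 \<le> i \<and> i < j \<and> lam i = lam j} \<subset> {i. 1 \<le> i \<and> i < j' \<and> lam i = lam j'}"
      by blast
  qed
  define \<Phi> where "\<Phi> i = F (lam (Suc i)) (pos (Suc i))" for i
  define \<mu> where "\<mu> i = lam (Suc i)" for i
  have mem: "lam (Suc i) \<in> lam ` {1..k}" if "i < k" for i using that by auto
  have eig: "in_eigenspace \<sigma> (\<mu> i) (\<Phi> i)" if "i < k" for i
    using F[OF mem[OF that]] pos_lt[of "Suc i"] that by (auto simp: \<Phi>_def \<mu>_def)
  show ?thesis
  proof (intro exI conjI allI impI)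
    fix i assume i: "i < k"
    show "in_eigenspace \<sigma> (\<mu> i) (\<Phi> i)" by (rule eig[OF i])
    show "lam k \<le> \<mu> i" using ge[of "Suc i"] i by (simp add: \<mu>_def)
    fix i' assume i': "i' < k"
    show "integral I11 (\<lambda>x. \<Phi> i x * \<Phi> i' x) = (if i = i' then 1 else 0)"
    proof (cases "lam (Suc i) = lam (Suc i')")
      case True
      have p1: "pos (Suc i) < cnt (lam (Suc i))" using pos_lt[of "Suc i"] i by simp
      have p2: "pos (Suc i') < cnt (lam (Suc i))" using pos_lt[of "Suc i'"] i' True by simp
      have "(pos (Suc i) = pos (Suc i')) = (i = i')"
      proof
        assume "pos (Suc i) = pos (Suc i')"
        show "i = i'"
        proof (rule ccontr)
          assume "i \<noteq> i'"
          then consider "i < i'" | "i' < i" by linarith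
          then show False
            using pos_mono[of "Suc i" "Suc i'"] pos_mono[of "Suc i'" "Suc i"] True
              \<open>pos (Suc i) = pos (Suc i')\<close> by cases auto
        qed
      qed simp
      then show ?thesis using F[OF mem[OF i]] p1 p2 True by (simp add: \<Phi>_def)
    next
      case False
      then have "i \<noteq> i'" by auto
      moreover have "integral I11 (\<lambda>x. \<Phi> i x * \<Phi> i' x) = 0"
        using eig_orth[OF eig[OF i] eig[OF i']] False by (simp add: \<mu>_def)
      ultimately show ?thesis by simp
    qed
  qed
qed


lemma poly_lowsum:
  fixes p :: "real poly"
  assumes "\<forall>j\<ge>m. coeff p j = 0"
  shows "poly p t = (\<Sum>j<m. coeff p j * t ^ j)"
proof -
  have "poly p t = (\<Sum>j\<le>degree p. coeff p j * t ^ j)" by (rule poly_altdef)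
  also have "\<dots> = (\<Sum>j<max m (Suc (degree p)). coeff p j * t ^ j)"
    by (rule sum.mono_neutral_left) (auto simp: coeff_eq_0)
  also have "\<dots> = (\<Sum>j<m. coeff p j * t ^ j)"
    by (rule sum.mono_neutral_right) (use assms in auto)
  finally show ?thesis .
qed

lemma cs_ineq:
  assumes \<psi>: "L2_11 \<psi>"
  shows "(integral I11 (\<lambda>x. \<bar>\<psi> x\<bar>))\<^sup>2 \<le> 2 * integral I11 (\<lambda>x. \<psi> x * \<psi> x)"
proof -
  define C where "C = integral I11 (\<lambda>x. \<bar>\<psi> x\<bar>)"
  define a where "a = C / 2"
  have i1: "(\<lambda>x. \<psi> x * \<psi> x) integrable_on I11" using L2_prod_int[OF \<psi> \<psi>] .
  have i2: "(\<lambda>x. (2 * a) * \<bar>\<psi> x\<bar>) integrable_on I11" using abs_L2_integrable[OF \<psi>] int_cmul by blast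
  have i3: "(\<lambda>x. a\<^sup>2) integrable_on I11" by auto
  have e: "(\<lambda>x. (\<bar>\<psi> x\<bar> - a)\<^sup>2) = (\<lambda>x. (\<psi> x * \<psi> x - (2 * a) * \<bar>\<psi> x\<bar>) + a\<^sup>2)"
  proof
    fix x
    have "(\<bar>\<psi> x\<bar> - a)\<^sup>2 = (\<bar>\<psi> x\<bar> * \<bar>\<psi> x\<bar> - (2 * a) * \<bar>\<psi> x\<bar>) + a\<^sup>2"
      by (simp add: power2_eq_square algebra_simps)
    then show "(\<bar>\<psi> x\<bar> - a)\<^sup>2 = (\<psi> x * \<psi> x - (2 * a) * \<bar>\<psi> x\<bar>) + a\<^sup>2"
      by (simp only: abs_mult_self_eq)
  qed
  have iE: "(\<lambda>x. (\<bar>\<psi> x\<bar> - a)\<^sup>2) integrable_on I11"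
    unfolding e by (intro integrable_add integrable_diff i1 i2 i3)
  have "0 \<le> integral I11 (\<lambda>x. (\<bar>\<psi> x\<bar> - a)\<^sup>2)"
    by (rule integral_nonneg[OF iE]) simp
  also have "\<dots> = (integral I11 (\<lambda>x. \<psi> x * \<psi> x) - (2 * a) * C) + 2 * a\<^sup>2"
    unfolding e
    by (subst integral_add, intro integrable_diff i1 i2, rule i3, subst integral_diff[OF i1 i2])
       (simp add: C_def content_real)
  finally show ?thesis unfolding a_def C_def[symmetric] by (simp add: power2_eq_square field_simps)
qed


lemma rayleigh:
  fixes \<Phi> :: "nat \<Rightarrow> real \<Rightarrow> real" and \<mu> :: "nat \<Rightarrow> real"
  assumes k: "k \<ge> 1"
    and eig: "\<forall>i<k. in_eigenspace \<sigma> (\<mu> i) (\<Phi> i) \<and> lam0 \<le> \<mu> i"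
    and on: "\<forall>i<k. \<forall>i'<k. integral I11 (\<lambda>x. \<Phi> i x * \<Phi> i' x) = (if i = i' then 1 else 0)"
    and approx: "\<forall>x\<in>I11. \<exists>p::real poly. (\<forall>j\<ge>k-1. coeff p j = 0) \<and>
                   (\<forall>t\<in>I11. \<bar>gauss_kernel \<sigma> x t - poly p t\<bar> \<le> E)"
  shows "lam0 \<le> 2 * E"
proof -
  define m where "m = k - 1"
  have mk: "m < k" using k by (simp add: m_def)
  have L: "L2_11 (\<Phi> i)" if "i < k" for i using eig that eig_L2 by blast
  define A where "A j i = integral I11 (\<lambda>t. t^j * \<Phi> i t)" for j i
  obtain c where c1: "\<exists>i<k. c i \<noteq> 0" and c2: "\<forall>j<m. (\<Sum>i<k. A j i * c i) = 0"
    using lin_solve[OF mk] by blast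
  define \<psi> where "\<psi> x = (\<Sum>i<k. c i * \<Phi> i x)" for x
  have L\<psi>: "L2_11 \<psi>" unfolding \<psi>_def[abs_def] by (rule L2_sum) (auto intro: L)
  define Q where "Q = (\<Sum>i<k. c i * c i)"
  have Qpos: "Q > 0"
  proof -
    obtain i0 where i0: "i0 < k" "c i0 \<noteq> 0" using c1 by blast
    have "c i0 * c i0 \<le> Q" unfolding Q_def
      by (rule member_le_sum) (use i0 in auto)
    moreover have "c i0 * c i0 > 0" using i0(2) not_real_square_gt_zero by blast
    ultimately show ?thesis by linarith
  qed
  have norm\<psi>: "integral I11 (\<lambda>x. \<psi> x * \<psi> x) = Q"
    unfolding \<psi>_def Q_def by (rule orth_expand) (use L on in auto)
  have cont_pow: "continuous_on I11 (\<lambda>t. t ^ j)" for j by (intro continuous_intros)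
  have orthj: "integral I11 (\<lambda>t. t^j * \<psi> t) = 0" if j: "j < m" for j
  proof -
    have ii: "(\<lambda>t. c i * (t^j * \<Phi> i t)) integrable_on I11" if "i < k" for i
      using cont_prod_int[OF cont_pow L[OF that]] int_cmul by blast
    have "integral I11 (\<lambda>t. t^j * \<psi> t) = integral I11 (\<lambda>t. \<Sum>i<k. c i * (t^j * \<Phi> i t))"
      unfolding \<psi>_def sum_distrib_left by (simp only: mult.left_commute)
    also have "\<dots> = (\<Sum>i<k. integral I11 (\<lambda>t. c i * (t^j * \<Phi> i t)))"
      by (rule integral_sum) (use ii in auto)
    also have "\<dots> = (\<Sum>i<k. A j i * c i)"
      by (intro sum.cong refl) (simp add: A_def)
    also have "\<dots> = 0" using c2 j by blast
    finally show ?thesis .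
  qed
  have orthp: "integral I11 (\<lambda>t. poly p t * \<psi> t) = 0" if p: "\<forall>j\<ge>m. coeff p j = 0" for p :: "real poly"
  proof -
    have ii: "(\<lambda>t. coeff p j * (t^j * \<psi> t)) integrable_on I11" for j
      using cont_prod_int[OF cont_pow L\<psi>] int_cmul by blast
    have "integral I11 (\<lambda>t. poly p t * \<psi> t) = integral I11 (\<lambda>t. \<Sum>j<m. coeff p j * (t^j * \<psi> t))"
      unfolding poly_lowsum[OF p] sum_distrib_right by (simp only: mult.assoc)
    also have "\<dots> = (\<Sum>j<m. integral I11 (\<lambda>t. coeff p j * (t^j * \<psi> t)))"
      by (rule integral_sum) (use ii in auto)
    also have "\<dots> = (\<Sum>j<m. coeff p j * integral I11 (\<lambda>t. t^j * \<psi> t))"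
      by (intro sum.cong refl Henstock_Kurzweil_Integration.integral_mult_right)
    also have "\<dots> = 0" using orthj by simp
    finally show ?thesis .
  qed
  define C where "C = integral I11 (\<lambda>x. \<bar>\<psi> x\<bar>)"
  have C0: "C \<ge> 0" unfolding C_def by (rule integral_nonneg[OF abs_L2_integrable[OF L\<psi>]]) auto
  have E0: "E \<ge> 0"
  proof -
    have "(0::real) \<in> I11" by simp
    then obtain p :: "real poly" where "\<forall>t\<in>I11. \<bar>gauss_kernel \<sigma> 0 t - poly p t\<bar> \<le> E"
      using approx by blast
    then have "\<bar>gauss_kernel \<sigma> 0 0 - poly p 0\<bar> \<le> E" by simp
    then show ?thesis using abs_ge_zero order_trans by blast
  qed
  have bnd: "\<bar>gauss_op \<sigma> \<psi> x\<bar> \<le> E * C" if x: "x \<in> I11" for x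
  proof -
    obtain p :: "real poly" where p1: "\<forall>j\<ge>k-1. coeff p j = 0"
        and p2: "\<forall>t\<in>I11. \<bar>gauss_kernel \<sigma> x t - poly p t\<bar> \<le> E"
      using approx x by blast
    have ip: "(\<lambda>t. poly p t * \<psi> t) integrable_on I11"
    proof (rule cont_prod_int[OF _ L\<psi>])
      show "continuous_on I11 (poly p)" by (rule continuous_on_poly[OF continuous_on_id, simplified])
    qed
    have ik: "(\<lambda>t. gauss_kernel \<sigma> x t * \<psi> t) integrable_on I11" by (rule op_integrable[OF L\<psi>])
    have "gauss_op \<sigma> \<psi> x = integral I11 (\<lambda>t. gauss_kernel \<sigma> x t * \<psi> t) - integral I11 (\<lambda>t. poly p t * \<psi> t)"
      using orthp[of p] p1 by (simp add: gauss_op_def m_def)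
    also have "\<dots> = integral I11 (\<lambda>t. (gauss_kernel \<sigma> x t - poly p t) * \<psi> t)"
      unfolding left_diff_distrib by (rule integral_diff[symmetric, OF ik ip])
    also have "\<bar>\<dots>\<bar> \<le> integral I11 (\<lambda>t. E * \<bar>\<psi> t\<bar>)"
    proof (rule integral_norm_bound_integral[where f="\<lambda>t. (gauss_kernel \<sigma> x t - poly p t) * \<psi> t", simplified])
      show "(\<lambda>t. (gauss_kernel \<sigma> x t - poly p t) * \<psi> t) integrable_on I11"
        unfolding left_diff_distrib by (intro integrable_diff ik ip)
      show "(\<lambda>t. E * \<bar>\<psi> t\<bar>) integrable_on I11" using abs_L2_integrable[OF L\<psi>] int_cmul by blast
      fix t assume t: "t \<in> I11"
      show "\<bar>(gauss_kernel \<sigma> x t - poly p t) * \<psi> t\<bar> \<le> E * \<bar>\<psi> t\<bar>"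
        unfolding abs_mult using p2 t by (intro mult_right_mono) auto
    qed
    also have "\<dots> = E * C" by (simp add: C_def)
    finally show ?thesis .
  qed
  have oplin: "gauss_op \<sigma> \<psi> x = (\<Sum>i<k. c i * gauss_op \<sigma> (\<Phi> i) x)" for x
  proof -
    have ii: "(\<lambda>t. c i * (gauss_kernel \<sigma> x t * \<Phi> i t)) integrable_on I11" if "i < k" for i
      using op_integrable[OF L[OF that]] int_cmul by blast
    have "gauss_op \<sigma> \<psi> x = integral I11 (\<lambda>t. \<Sum>i<k. c i * (gauss_kernel \<sigma> x t * \<Phi> i t))"
      unfolding gauss_op_def \<psi>_def sum_distrib_left by (simp only: mult.left_commute)
    also have "\<dots> = (\<Sum>i<k. integral I11 (\<lambda>t. c i * (gauss_kernel \<sigma> x t * \<Phi> i t)))"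
      by (rule integral_sum) (use ii in auto)
    also have "\<dots> = (\<Sum>i<k. c i * gauss_op \<sigma> (\<Phi> i) x)"
      by (intro sum.cong refl) (simp add: gauss_op_def)
    finally show ?thesis .
  qed
  define g where "g x = (\<Sum>i<k. (c i * \<mu> i) * \<Phi> i x)" for x
  have Lg: "L2_11 g" unfolding g_def[abs_def] by (rule L2_sum) (auto intro: L)
  define N where "N = \<Union> ((\<lambda>i. {x \<in> I11. gauss_op \<sigma> (\<Phi> i) x \<noteq> \<mu> i * \<Phi> i x}) ` {..<k})"
  have negN: "negligible N"
    unfolding N_def using eig by (intro negligible_Union) (auto simp: in_eigenspace_def)
  have ae: "\<psi> x * gauss_op \<sigma> \<psi> x = \<psi> x * g x" if "x \<in> I11 - N" for x
  proof -
    have "gauss_op \<sigma> (\<Phi> i) x = \<mu> i * \<Phi> i x" if "i < k" for i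
      using \<open>x \<in> I11 - N\<close> that by (auto simp: N_def)
    then have "gauss_op \<sigma> \<psi> x = g x"
      unfolding oplin g_def by (intro sum.cong refl) auto
    then show ?thesis by simp
  qed
  have i\<psi>g: "(\<lambda>x. \<psi> x * g x) integrable_on I11" by (rule L2_prod_int[OF L\<psi> Lg])
  have iT: "(\<lambda>x. \<psi> x * gauss_op \<sigma> \<psi> x) integrable_on I11"
    by (rule integrable_spike[OF i\<psi>g negN ae])
  have valT: "integral I11 (\<lambda>x. \<psi> x * gauss_op \<sigma> \<psi> x) = integral I11 (\<lambda>x. \<psi> x * g x)"
    by (rule integral_spike[OF negN ae, symmetric])
  have valg: "integral I11 (\<lambda>x. \<psi> x * g x) = (\<Sum>i<k. c i * (c i * \<mu> i))"
    unfolding \<psi>_def g_def by (rule orth_expand) (use L on in auto)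
  have low: "lam0 * Q \<le> (\<Sum>i<k. c i * (c i * \<mu> i))"
    unfolding Q_def sum_distrib_left
  proof (rule sum_mono)
    fix i assume "i \<in> {..<k}"
    then have "lam0 \<le> \<mu> i" using eig by auto
    then have "(c i * c i) * lam0 \<le> (c i * c i) * \<mu> i" by (intro mult_left_mono) auto
    then show "lam0 * (c i * c i) \<le> c i * (c i * \<mu> i)" by (simp only: mult_ac)
  qed
  have up: "integral I11 (\<lambda>x. \<psi> x * gauss_op \<sigma> \<psi> x) \<le> E * C * C"
  proof -
    have "integral I11 (\<lambda>x. \<psi> x * gauss_op \<sigma> \<psi> x) \<le> integral I11 (\<lambda>x. (E * C) * \<bar>\<psi> x\<bar>)"
    proof (rule integral_le[OF iT])
      show "(\<lambda>x. (E * C) * \<bar>\<psi> x\<bar>) integrable_on I11" using abs_L2_integrable[OF L\<psi>] int_cmul by blast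
      fix x assume x: "x \<in> I11"
      have "\<psi> x * gauss_op \<sigma> \<psi> x \<le> \<bar>\<psi> x\<bar> * \<bar>gauss_op \<sigma> \<psi> x\<bar>"
        using abs_ge_self[of "\<psi> x * gauss_op \<sigma> \<psi> x"] by (simp only: abs_mult)
      also have "\<dots> \<le> \<bar>\<psi> x\<bar> * (E * C)" using bnd[OF x] by (intro mult_left_mono) auto
      finally show "\<psi> x * gauss_op \<sigma> \<psi> x \<le> (E * C) * \<bar>\<psi> x\<bar>" by (simp add: mult.commute)
    qed
    also have "\<dots> = E * C * C" by (simp add: C_def)
    finally show ?thesis .
  qed
  have cs: "C\<^sup>2 \<le> 2 * Q" using cs_ineq[OF L\<psi>] norm\<psi> by (simp add: C_def)
  have "lam0 * Q \<le> E * C * C" using low valg valT up by linarith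
  also have "\<dots> = E * C\<^sup>2" by (simp add: power2_eq_square)
  also have "\<dots> \<le> E * (2 * Q)" using cs E0 by (intro mult_left_mono) auto
  finally have "lam0 * Q \<le> (2 * E) * Q" by simp
  then show ?thesis using Qpos by simp
qed


lemma powr_half_pow: "x > 0 \<Longrightarrow> x powr (real m / 2) = sqrt x ^ m"
proof -
  assume x: "x > 0"
  have "x powr (real m / 2) = (x powr (1/2)) powr real m" by (simp add: powr_powr)
  also have "x powr (1/2) = sqrt x" using x by (simp add: powr_half_sqrt)
  also have "sqrt x powr real m = sqrt x ^ m" using x by (simp add: powr_realpow)
  finally show ?thesis .
qed

lemma sqrt_exp1: "sqrt (exp 1) = exp (1/2)"
proof -
  have "exp 1 = (exp (1/2::real))\<^sup>2" by (simp add: power2_eq_square exp_add[symmetric])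
  then show ?thesis by simp
qed

lemma final_arith:
  fixes \<sigma> :: real
  assumes s: "\<sigma> > 0" and m: "m \<ge> 1"
  defines "r \<equiv> sqrt (2 * real m) / (2 * \<sigma>)"
  shows "2 * (fact m * exp (\<sigma>\<^sup>2 * r\<^sup>2) / r^m / (fact m * 2^(m-1)))
         < 8 * (2 / exp 1 * real m) powr (- real m / 2) * \<sigma>^m"
proof -
  define q where "q = exp (1/2) * \<sigma> / sqrt (2 * real m)"
  have mpos: "real m > 0" using m by simp
  have sq: "sqrt (2 * real m) > 0" using mpos by simp
  have r: "r > 0" unfolding r_def using sq s by simp
  have q0: "q > 0" unfolding q_def using sq s by simp
  have sr: "\<sigma>\<^sup>2 * r\<^sup>2 = real m * (1/2)"
    unfolding r_def using s mpos by (simp add: power_divide power_mult_distrib field_simps)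
  have ex: "exp (\<sigma>\<^sup>2 * r\<^sup>2) = exp (1/2) ^ m" unfolding sr by (rule exp_of_nat_mult)
  have two: "(2::real) ^ m = 2 * 2 ^ (m - 1)" using m by (cases m) auto
  have lhs: "2 * (fact m * exp (\<sigma>\<^sup>2 * r\<^sup>2) / r^m / (fact m * 2^(m-1))) = 4 * q ^ m"
  proof -
    have "2 * (fact m * exp (\<sigma>\<^sup>2 * r\<^sup>2) / r^m / (fact m * 2^(m-1))) = 4 * (exp (1/2) ^ m / (2 * r) ^ m)"
      unfolding ex power_mult_distrib two using r by (simp add: field_simps)
    also have "exp (1/2) ^ m / (2 * r) ^ m = q ^ m"
      unfolding q_def r_def power_divide[symmetric] using s sq by (simp add: field_simps)
    finally show ?thesis .
  qed
  have rhs: "(2 / exp 1 * real m) powr (- real m / 2) * \<sigma>^m = q ^ m"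
  proof -
    have pos: "2 / exp 1 * real m > 0" using mpos by simp
    have "(2 / exp 1 * real m) powr (- real m / 2) = inverse ((2 / exp 1 * real m) powr (real m / 2))"
      by (simp add: powr_minus[symmetric])
    also have "\<dots> = inverse (sqrt (2 / exp 1 * real m) ^ m)" using powr_half_pow[OF pos] by simp
    also have "sqrt (2 / exp 1 * real m) = sqrt (2 * real m) / exp (1/2)"
      by (simp add: real_sqrt_mult real_sqrt_divide sqrt_exp1[symmetric] field_simps)
    finally have "(2 / exp 1 * real m) powr (- real m / 2) = (exp (1/2) / sqrt (2 * real m)) ^ m"
      by (simp add: power_inverse[symmetric] inverse_eq_divide power_divide)
    then show ?thesis unfolding q_def by (simp add: power_mult_distrib[symmetric] mult.commute mult.left_commute)
  qed
  show ?thesis unfolding lhs using rhs q0 by (simp add: mult.assoc)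
qed


theorem lemma9:
  fixes \<sigma> :: real and lam :: "nat \<Rightarrow> real" and k :: nat
  assumes "\<sigma> > 0"
    and "is_eigenvalue_seq \<sigma> lam"
    and "k \<ge> 1"
  shows "lam k < 8 * (if k = 1 then 1
                      else (2 / exp 1 * real (k - 1)) powr (- real (k - 1) / 2)) * \<sigma> ^ (k - 1)"
proof (cases "lam k \<le> 0")
  case True
  have "0 < 8 * (if k = 1 then 1
                      else (2 / exp 1 * real (k - 1)) powr (- real (k - 1) / 2)) * \<sigma> ^ (k - 1)"
  proof -
    have "0 < (if k = 1 then 1 else (2 / exp 1 * real (k - 1)) powr (- real (k - 1) / 2))"
    proof (cases "k = 1")
      case False
      then have "2 / exp 1 * real (k - 1) \<noteq> 0" using assms(3) by simp
      then show ?thesis using False by (simp add: powr_gt_zero)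
    qed simp
    moreover have "0 < \<sigma> ^ (k - 1)" using assms(1) by simp
    ultimately show ?thesis by simp
  qed
  then show ?thesis using True by linarith
next
  case False
  then have pos: "lam k > 0" by simp
  obtain \<Phi> \<mu> where fam1: "\<forall>i<k. in_eigenspace \<sigma> (\<mu> i) (\<Phi> i) \<and> lam k \<le> \<mu> i"
      and fam2: "\<forall>i<k. \<forall>i'<k. integral I11 (\<lambda>x. \<Phi> i x * \<Phi> i' x) = (if i = i' then 1 else 0)"
    using get_family[OF assms(2) assms(3) pos] by blast
  show ?thesis
  proof (cases "k = 1")
    case True
    have approx: "\<forall>x\<in>I11. \<exists>p::real poly. (\<forall>j\<ge>k-1. coeff p j = 0) \<and>
                   (\<forall>t\<in>I11. \<bar>gauss_kernel \<sigma> x t - poly p t\<bar> \<le> 1)"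
    proof
      fix x :: real assume "x \<in> I11"
      show "\<exists>p::real poly. (\<forall>j\<ge>k-1. coeff p j = 0) \<and>
                   (\<forall>t\<in>I11. \<bar>gauss_kernel \<sigma> x t - poly p t\<bar> \<le> 1)"
      proof (intro exI[of _ 0] conjI ballI allI impI)
        fix t :: real
        have "- (\<sigma>\<^sup>2) * (x - t)\<^sup>2 \<le> 0" by (simp add: mult_nonneg_nonneg)
        then show "\<bar>gauss_kernel \<sigma> x t - poly 0 t\<bar> \<le> 1" by (simp add: gauss_kernel_def)
      qed simp
    qed
    have "lam k \<le> 2 * 1" by (rule rayleigh[OF assms(3) fam1 fam2 approx])
    then show ?thesis using True by simp
  next
    case False
    define m where "m = k - 1"
    have m1: "m \<ge> 1" using False assms(3) by (simp add: m_def)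
    define r where "r = sqrt (2 * real m) / (2 * \<sigma>)"
    have r: "r > 0" unfolding r_def using m1 assms(1) by simp
    define M where "M = fact m * exp (\<sigma>\<^sup>2 * r\<^sup>2) / r^m"
    define E where "E = M / (fact m * 2^(m-1))"
    have approx: "\<forall>x\<in>I11. \<exists>p::real poly. (\<forall>j\<ge>k-1. coeff p j = 0) \<and>
                   (\<forall>t\<in>I11. \<bar>gauss_kernel \<sigma> x t - poly p t\<bar> \<le> E)"
    proof
      fix x :: real assume "x \<in> I11"
      obtain D where D0: "D 0 = (\<lambda>t. exp (- (\<sigma>\<^sup>2) * (x - t)\<^sup>2))"
          and Dd: "\<forall>j t. (D j has_real_derivative D (Suc j) t) (at t)"
          and Db: "\<forall>n t. \<bar>D n t\<bar> \<le> fact n * exp (\<sigma>\<^sup>2 * r\<^sup>2) / r^n"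
        using gauss_derivs[OF r, of \<sigma> x] by blast
      obtain p where p1: "degree p < m" and p2: "\<forall>t\<in>{-1..1}. \<bar>D 0 t - poly p t\<bar> \<le> M / (fact m * 2^(m-1))"
        using cheb_interp[OF m1, of D M] Dd Db unfolding M_def by blast
      show "\<exists>p::real poly. (\<forall>j\<ge>k-1. coeff p j = 0) \<and>
                   (\<forall>t\<in>I11. \<bar>gauss_kernel \<sigma> x t - poly p t\<bar> \<le> E)"
      proof (intro exI[of _ p] conjI allI impI ballI)
        fix j assume "j \<ge> k - 1"
        then show "coeff p j = 0" using p1 by (intro coeff_eq_0) (simp add: m_def)
      next
        fix t :: real assume "t \<in> I11"
        then show "\<bar>gauss_kernel \<sigma> x t - poly p t\<bar> \<le> E"
          using p2 D0 by (simp add: gauss_kernel_def E_def)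
      qed
    qed
    have "lam k \<le> 2 * E" by (rule rayleigh[OF assms(3) fam1 fam2 approx])
    also have "2 * E < 8 * (2 / exp 1 * real m) powr (- real m / 2) * \<sigma>^m"
      using final_arith[OF assms(1) m1] unfolding E_def M_def r_def by simp
    finally show ?thesis using False by (simp add: m_def)
  qed
qed

end
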